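(* (a) There is an absolute constant $c>0$ such that for every event graph $G$ with $n$ nodes and every node $(v,X)$ of the unique sink component $\mathcal C$ of $\mathrm{dec}(G)$, a certifying walk for $(v,X)$ of minimum length has length at most $c n^2$. Consequently, for any two nodes $(u,X),(v,Y)$ of $\mathcal C$ there is a directed walk in $\mathcal C$ from $(u,X)$ to $(v,Y)$ of length at most $c' n^2$ for an absolute constant $c'$, i.e., $\mathcal C$ has diameter $O(n^2)$. (b) Both bounds are tight: for every integer $m\ge 2$, let $P$ be the path with $n=2m+1$ vertices whose labels, in order along the path, are $\mathtt{i}m,\mathtt{i}(m-1),\dots,\mathtt{i}1,\mathtt{d}m,\mathtt{d}1,\mathtt{d}2,\dots,\mathtt{d}m$, let $v$ be its middle vertex (labeled $\mathtt{d}m$), and let $Y=\{2k+1 : k=0,\dots,\lfloor m/2\rfloor-1\}$. Then $(v,\emptyset)$ and $(v,Y)$ are nodes of the unique sink component of $\mathrm{dec}(P)$, every certifying walk for $(v,Y)$ has length $\Omega(n^2)$, and every directed walk in $\mathrm{dec}(P)$ from $(v,\emptyset)$ to $(v,Y)$ has length $\Omega(n^2)$.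
   Context: An event graph is a finite, connected, undirected graph $G=(V,E)$, with $n=|V|$, in which every node $v$ carries a label that is either $\mathtt{i}x_v$ (insertion of $x_v$) or $\mathtt{d}x_v$ (deletion of $x_v$), where $x_v$ is an element of a finite universe $\mathcal U$. Write $\mathcal U_{|V}=\{x_v : v\in V\}$. It is assumed that for each $x\in\mathcal U_{|V}$ at least one node is labeled $\mathtt{i}x$ and at least one node is labeled $\mathtt{d}x$. The decorated graph $\mathrm{dec}(G)$ is the directed graph with vertex set $V\times 2^{\mathcal U_{|V}}$ in which $((u,X),(v,Y))$ is an edge if and only if $\{u,v\}\in E$ and $Y=X\cup\{x_v\}$ when $v$ is labeled $\mathtt{i}x_v$, respectively $Y=X\setminus\{x_v\}$ when $v$ is labeled $\mathtt{d}x_v$. A sink component of $\mathrm{dec}(G)$ is a strongly connected component of $\mathrm{dec}(G)$ from which no edge leads to a different strongly connected component; $\mathrm{dec}(G)$ has exactly one sink component, denoted $\mathcal C$. A walk in a graph is a finite sequence of nodes in which each node is joined by an edge to its successor (nodes may repeat); it is closed if its first and last nodes coincide; its length is its number of nodes. Given $v\in V$ and $X\subseteq\mathcal U_{|V}$, a certifying walk for $(v,X)$ is a closed walk $W$ in $G$ that starts and ends at $v$, contains for every $x\in\mathcal U_{|V}$ at least one node labeled $\mathtt{i}x$ or $\mathtt{d}x$, and satisfies, for every $x\in\mathcal U_{|V}$: $x\in X$ if and only if the last node of $W$ whose label refers to $x$ is labeled $\mathtt{i}x$. (A node $(v,X)$ lies in $\mathcal C$ iff a certifying walk for it exists.) 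*)

theory Defs
  imports Complex_Main
begin

text \<open>Event graphs. Vertices and universe elements are natural numbers.
  A label is a pair (b, x): b = True means insertion of x, b = False deletion of x.\<close>

type_synonym label = "bool \<times> nat"

definition univ :: "nat set \<Rightarrow> (nat \<Rightarrow> label) \<Rightarrow> nat set" where
  "univ V lab = (\<lambda>v. snd (lab v)) ` V"

definition adj :: "nat set set \<Rightarrow> (nat \<times> nat) set" where
  "adj E = {(u, v). {u, v} \<in> E}"

definition event_graph :: "nat set \<Rightarrow> nat set set \<Rightarrow> (nat \<Rightarrow> label) \<Rightarrow> bool" where
  "event_graph V E lab \<longleftrightarrow>
     finite V \<and> V \<noteq> {} \<and>
     E \<subseteq> {{u, v} | u v. u \<in> V \<and> v \<in> V \<and> u \<noteq> v} \<and>
     (\<forall>u\<in>V. \<forall>v\<in>V. (u, v) \<in> (adj E)\<^sup>*) \<and>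
     (\<forall>x\<in>univ V lab. (\<exists>v\<in>V. lab v = (True, x)) \<and> (\<exists>v\<in>V. lab v = (False, x)))"

definition step :: "(nat \<Rightarrow> label) \<Rightarrow> nat \<Rightarrow> nat set \<Rightarrow> nat set" where
  "step lab v X = (if fst (lab v) then insert (snd (lab v)) X else X - {snd (lab v)})"

definition dec_nodes :: "nat set \<Rightarrow> (nat \<Rightarrow> label) \<Rightarrow> (nat \<times> nat set) set" where
  "dec_nodes V lab = V \<times> Pow (univ V lab)"

definition dec_edges :: "nat set \<Rightarrow> nat set set \<Rightarrow> (nat \<Rightarrow> label) \<Rightarrow> ((nat \<times> nat set) \<times> (nat \<times> nat set)) set" where
  "dec_edges V E lab =
     {((u, X), (v, Y)). (u, X) \<in> dec_nodes V lab \<and> (v, Y) \<in> dec_nodes V lab \<and>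
                        {u, v} \<in> E \<and> Y = step lab v X}"

definition is_scc :: "nat set \<Rightarrow> nat set set \<Rightarrow> (nat \<Rightarrow> label) \<Rightarrow> (nat \<times> nat set) set \<Rightarrow> bool" where
  "is_scc V E lab C \<longleftrightarrow>
     C \<noteq> {} \<and> C \<subseteq> dec_nodes V lab \<and>
     (\<forall>a\<in>C. \<forall>b\<in>C. (a, b) \<in> (dec_edges V E lab)\<^sup>*) \<and>
     (\<forall>a\<in>C. \<forall>b. (a, b) \<in> (dec_edges V E lab)\<^sup>* \<and> (b, a) \<in> (dec_edges V E lab)\<^sup>* \<longrightarrow> b \<in> C)"

definition is_sink_component :: "nat set \<Rightarrow> nat set set \<Rightarrow> (nat \<Rightarrow> label) \<Rightarrow> (nat \<times> nat set) set \<Rightarrow> bool" where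
  "is_sink_component V E lab C \<longleftrightarrow>
     is_scc V E lab C \<and> (\<forall>a\<in>C. \<forall>b. (a, b) \<in> dec_edges V E lab \<longrightarrow> b \<in> C)"

text \<open>Walks are nonempty lists of nodes; their length is the number of nodes.\<close>

definition is_walk :: "nat set \<Rightarrow> nat set set \<Rightarrow> nat list \<Rightarrow> bool" where
  "is_walk V E W \<longleftrightarrow> W \<noteq> [] \<and> set W \<subseteq> V \<and>
     (\<forall>i. Suc i < length W \<longrightarrow> {W ! i, W ! Suc i} \<in> E)"

definition is_dwalk :: "('a \<times> 'a) set \<Rightarrow> 'a list \<Rightarrow> bool" where
  "is_dwalk R W \<longleftrightarrow> W \<noteq> [] \<and> (\<forall>i. Suc i < length W \<longrightarrow> (W ! i, W ! Suc i) \<in> R)"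

definition certifying_walk ::
  "nat set \<Rightarrow> nat set set \<Rightarrow> (nat \<Rightarrow> label) \<Rightarrow> nat \<Rightarrow> nat set \<Rightarrow> nat list \<Rightarrow> bool" where
  "certifying_walk V E lab v X W \<longleftrightarrow>
     is_walk V E W \<and> hd W = v \<and> last W = v \<and>
     (\<forall>x\<in>univ V lab. \<exists>w\<in>set W. snd (lab w) = x) \<and>
     (\<forall>x\<in>univ V lab. x \<in> X \<longleftrightarrow> fst (lab (last (filter (\<lambda>w. snd (lab w) = x) W))))"

text \<open>The tightness example: path 0 - 1 - ... - 2m, labels
  i m, i (m-1), ..., i 1, d m, d 1, ..., d m; middle vertex m.\<close>

definition pathV :: "nat \<Rightarrow> nat set" where
  "pathV m = {0..2*m}"

definition pathE :: "nat \<Rightarrow> nat set set" where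
  "pathE m = {{i, Suc i} | i. i < 2*m}"

definition pathLab :: "nat \<Rightarrow> nat \<Rightarrow> label" where
  "pathLab m i = (if i < m then (True, m - i) else if i = m then (False, m) else (False, i - m))"

definition pathY :: "nat \<Rightarrow> nat set" where
  "pathY m = {2*k+1 | k. k < m div 2}"

end

theory Submission
  imports Defs
begin


fun wk :: "nat set set \<Rightarrow> nat list \<Rightarrow> bool" where
  "wk E [] = True"
| "wk E [x] = True"
| "wk E (x # y # xs) = ({x, y} \<in> E \<and> wk E (y # xs))"

fun dwk :: "('a \<times> 'a) set \<Rightarrow> 'a list \<Rightarrow> bool" where
  "dwk R [] = True"
| "dwk R [x] = True"
| "dwk R (x # y # xs) = ((x, y) \<in> R \<and> dwk R (y # xs))"

lemma wk_iff: "wk E W \<longleftrightarrow> (\<forall>i. Suc i < length W \<longrightarrow> {W ! i, W ! Suc i} \<in> E)"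
proof (induction E W rule: wk.induct)
  case (3 E x y xs)
  show ?case
    apply (simp only: wk.simps 3)
    apply (auto simp: nth_Cons split: nat.splits)
    done
qed auto

lemma dwk_iff: "dwk R W \<longleftrightarrow> (\<forall>i. Suc i < length W \<longrightarrow> (W ! i, W ! Suc i) \<in> R)"
proof (induction R W rule: dwk.induct)
  case (3 R x y xs)
  show ?case
    apply (simp only: dwk.simps 3)
    apply (auto simp: nth_Cons split: nat.splits)
    done
qed auto

lemma is_walk_iff: "is_walk V E W \<longleftrightarrow> W \<noteq> [] \<and> set W \<subseteq> V \<and> wk E W"
  by (simp add: is_walk_def wk_iff)

lemma is_dwalk_iff: "is_dwalk R W \<longleftrightarrow> W \<noteq> [] \<and> dwk R W"
  by (simp add: is_dwalk_def dwk_iff)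

lemma wk_append: "wk E (xs @ y # ys) \<longleftrightarrow> wk E (xs @ [y]) \<and> wk E (y # ys)"
proof (induction xs)
  case (Cons x xs)
  then show ?case by (cases xs) auto
qed simp

lemma wk_Cons: "L \<noteq> [] \<Longrightarrow> wk E (w # L) \<longleftrightarrow> {w, hd L} \<in> E \<and> wk E L"
  by (cases L) auto

lemma wk_join: "wk E A \<Longrightarrow> wk E B \<Longrightarrow> A \<noteq> [] \<Longrightarrow> B \<noteq> [] \<Longrightarrow> last A = hd B \<Longrightarrow> wk E (A @ tl B)"
proof -
  assume a: "wk E A" "wk E B" "A \<noteq> []" "B \<noteq> []" "last A = hd B"
  have "A @ tl B = butlast A @ last A # tl B" using a(3)
    by (metis append_butlast_last_id append.assoc append_Cons append_Nil)
  moreover have "wk E (butlast A @ [last A])" using a(1,3) by simp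
  moreover have "wk E (last A # tl B)" using a by (cases B) auto
  ultimately show ?thesis using wk_append by metis
qed

lemma wk_take: "wk E xs \<Longrightarrow> wk E (take k xs)"
proof (induction E xs arbitrary: k rule: wk.induct)
  case (3 E x y xs)
  show ?case
  proof (cases k)
    case (Suc k')
    show ?thesis
    proof (cases k')
      case (Suc k'')
      have "wk E (take k' (y # xs))" using 3 by simp
      moreover have "take k (x # y # xs) = x # take k' (y # xs)" using Suc \<open>k = Suc k'\<close> by simp
      moreover have "take k' (y # xs) = y # take k'' xs" using Suc by simp
      ultimately show ?thesis using 3 by simp
    qed (simp add: Suc)
  qed simp
qed (auto simp: take_Cons split: nat.splits)

lemma wk_distinct:
  "wk E Q \<Longrightarrow> Q \<noteq> [] \<Longrightarrow> \<exists>Q'. wk E Q' \<and> Q' \<noteq> [] \<and> hd Q' = hd Q \<and> last Q' = last Q \<and> set Q' \<subseteq> set Q \<and> distinct Q'"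
proof (induction "length Q" arbitrary: Q rule: less_induct)
  case less
  show ?case
  proof (cases "distinct Q")
    case True then show ?thesis using less by blast
  next
    case False
    then obtain xs u ys zs where Q: "Q = xs @ [u] @ ys @ [u] @ zs"
      using not_distinct_decomp by blast
    let ?Q = "xs @ u # zs"
    have w1: "wk E (xs @ [u])" and w2: "wk E (u # ys @ u # zs)"
      using less(2) wk_append[of E xs u "ys @ u # zs"] Q by auto
    have "wk E (u # zs)" using w2 wk_append[of E "u # ys" u zs] by simp
    hence "wk E ?Q" using w1 wk_append by blast
    moreover have "length ?Q < length Q" using Q by simp
    ultimately obtain Q' where "wk E Q' \<and> Q' \<noteq> [] \<and> hd Q' = hd ?Q \<and> last Q' = last ?Q \<and> set Q' \<subseteq> set ?Q \<and> distinct Q'"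
      using less(1)[of ?Q] by blast
    moreover have "hd ?Q = hd Q" using Q by (cases xs) auto
    moreover have "last ?Q = last Q" using Q by (cases zs) auto
    moreover have "set ?Q \<subseteq> set Q" using Q by auto
    ultimately show ?thesis by (metis order_trans)
  qed
qed

fun okf :: "(nat \<Rightarrow> bool) \<Rightarrow> (nat \<Rightarrow> nat) \<Rightarrow> nat list \<Rightarrow> bool" where
  "okf g e [] = True"
| "okf g e (w # ws) = (okf g e ws \<and> (g w \<or> (\<exists>u\<in>set ws. e u = e w \<and> g u)))"

lemma okf_good: "okf g e xs \<Longrightarrow> u \<in> set xs \<Longrightarrow> \<exists>u'\<in>set xs. e u' = e u \<and> g u'"
  by (induction xs) auto

lemma okf_prefix: "okf g e xs \<Longrightarrow> \<forall>y\<in>set ys. \<exists>u\<in>set xs. e u = e y \<Longrightarrow> okf g e (ys @ xs)"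
proof (induction ys)
  case (Cons y ys)
  then obtain u where "u \<in> set xs" "e u = e y" by auto
  then obtain u' where "u' \<in> set xs" "e u' = e y" "g u'" using okf_good[OF Cons(2)] by metis
  then show ?case using Cons by auto
qed simp

lemma okf_last: "okf g e xs \<Longrightarrow> filter (\<lambda>w. e w = x) xs \<noteq> [] \<Longrightarrow> g (last (filter (\<lambda>w. e w = x) xs))"
proof (induction xs)
  case (Cons w ws)
  show ?case
  proof (cases "filter (\<lambda>w. e w = x) ws = []")
    case True
    then have "e w = x" using Cons(3) by (auto split: if_splits)
    moreover have "\<not> (\<exists>u\<in>set ws. e u = e w)" using True \<open>e w = x\<close> by (auto simp: filter_empty_conv)
    ultimately show ?thesis using Cons True by auto
  next
    case False
    then show ?thesis using Cons by auto
  qed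
qed simp

lemma last_okf: "\<forall>w\<in>set xs. g (last (filter (\<lambda>u. e u = e w) xs)) \<Longrightarrow> okf g e xs"
proof (induction xs)
  case (Cons w ws)
  have "\<forall>w'\<in>set ws. g (last (filter (\<lambda>u. e u = e w') ws))"
  proof
    fix w' assume "w' \<in> set ws"
    then have "filter (\<lambda>u. e u = e w') ws \<noteq> []" by (auto simp: filter_empty_conv)
    then have "last (filter (\<lambda>u. e u = e w') (w # ws)) = last (filter (\<lambda>u. e u = e w') ws)"
      by auto
    then show "g (last (filter (\<lambda>u. e u = e w') ws))"
      using Cons(2) \<open>w' \<in> set ws\<close> by (metis list.set_intros(2))
  qed
  hence "okf g e ws" using Cons by blast
  moreover have "g w \<or> (\<exists>u\<in>set ws. e u = e w \<and> g u)"
  proof (cases "filter (\<lambda>u. e u = e w) ws = []")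
    case True then show ?thesis using Cons(2) by auto
  next
    case False
    let ?u = "last (filter (\<lambda>u. e u = e w) ws)"
    have "?u \<in> set (filter (\<lambda>u. e u = e w) ws)" using False last_in_set by blast
    hence "?u \<in> set ws" "e ?u = e w" by auto
    moreover have "g ?u" using Cons(2) False by auto
    ultimately show ?thesis by blast
  qed
  ultimately show ?case by simp
qed simp

lemma fold_step_mem:
  "x \<in> fold (step lab) ws Z \<longleftrightarrow>
    (if \<exists>w\<in>set ws. snd (lab w) = x then fst (lab (last (filter (\<lambda>w. snd (lab w) = x) ws))) else x \<in> Z)"
proof (induction ws rule: rev_induct)
  case (snoc w ws)
  define S where "S = fold (step lab) ws Z"
  have eq: "fold (step lab) (ws @ [w]) Z = step lab w S" by (simp add: S_def)
  have IH: "x \<in> S \<longleftrightarrow> (if \<exists>w\<in>set ws. snd (lab w) = x then fst (lab (last (filter (\<lambda>w. snd (lab w) = x) ws))) else x \<in> Z)"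
    using snoc.IH S_def by simp
  show ?case
    unfolding eq by (cases "snd (lab w) = x") (auto simp: step_def IH)
qed simp

fun trace :: "(nat \<Rightarrow> label) \<Rightarrow> nat set \<Rightarrow> nat list \<Rightarrow> (nat \<times> nat set) list" where
  "trace lab Z [] = []"
| "trace lab Z [q] = [(q, Z)]"
| "trace lab Z (q # q' # qs) = (q, Z) # trace lab (step lab q' Z) (q' # qs)"

lemma trace_length: "length (trace lab Z Q) = length Q"
  by (induction lab Z Q rule: trace.induct) auto

lemma trace_hd: "Q \<noteq> [] \<Longrightarrow> hd (trace lab Z Q) = (hd Q, Z)"
  by (cases "(lab, Z, Q)" rule: trace.cases) auto

lemma trace_ne: "Q \<noteq> [] \<Longrightarrow> trace lab Z Q \<noteq> []"
  by (cases "(lab, Z, Q)" rule: trace.cases) auto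

lemma trace_last: "Q \<noteq> [] \<Longrightarrow> last (trace lab Z Q) = (last Q, fold (step lab) (tl Q) Z)"
  by (induction lab Z Q rule: trace.induct) (auto simp: trace_hd trace_ne)


lemma step_sub: "v \<in> V \<Longrightarrow> Z \<subseteq> univ V lab \<Longrightarrow> step lab v Z \<subseteq> univ V lab"
  by (auto simp: step_def univ_def)

lemma dwk_Cons: "L \<noteq> [] \<Longrightarrow> dwk R (x # L) \<longleftrightarrow> (x, hd L) \<in> R \<and> dwk R L"
  by (cases L) auto

lemma trace_dwk: "wk E Q \<Longrightarrow> set Q \<subseteq> V \<Longrightarrow> Z \<subseteq> univ V lab \<Longrightarrow> dwk (dec_edges V E lab) (trace lab Z Q)"
proof (induction lab Z Q rule: trace.induct)
  case (3 lab Z q q' qs)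
  have "step lab q' Z \<subseteq> univ V lab" using 3 step_sub by auto
  then have "dwk (dec_edges V E lab) (trace lab (step lab q' Z) (q' # qs))" using 3 by auto
  moreover have "((q, Z), (q', step lab q' Z)) \<in> dec_edges V E lab"
    using 3 \<open>step lab q' Z \<subseteq> univ V lab\<close> by (auto simp: dec_edges_def dec_nodes_def)
  ultimately show ?case by (simp add: dwk_Cons trace_ne trace_hd)
qed auto

lemma dwk_rtrancl: "dwk R L \<Longrightarrow> L \<noteq> [] \<Longrightarrow> (hd L, last L) \<in> R\<^sup>*"
  by (induction R L rule: dwk.induct) auto

lemma dwk_closed: "dwk R L \<Longrightarrow> L \<noteq> [] \<Longrightarrow> hd L \<in> C \<Longrightarrow> (\<forall>a\<in>C. \<forall>b. (a, b) \<in> R \<longrightarrow> b \<in> C) \<Longrightarrow> set L \<subseteq> C"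
  by (induction R L rule: dwk.induct) auto

lemma dwk_proj: "dwk (dec_edges V E lab) L \<Longrightarrow> wk E (map fst L) \<and>
   (L \<noteq> [] \<longrightarrow> snd (last L) = fold (step lab) (tl (map fst L)) (snd (hd L)))"
proof (induction L)
  case (Cons x L)
  show ?case
  proof (cases L)
    case (Cons y L')
    have e: "(x, y) \<in> dec_edges V E lab" and d: "dwk (dec_edges V E lab) L"
      using Cons.prems \<open>L = y # L'\<close> by auto
    have E1: "{fst x, fst y} \<in> E" and E2: "snd y = step lab (fst y) (snd x)"
      using e unfolding dec_edges_def by (auto simp: case_prod_beta)
    have IH: "wk E (map fst L) \<and> snd (last L) = fold (step lab) (tl (map fst L)) (snd (hd L))"
      using Cons.IH d \<open>L = y # L'\<close> by simp
    show ?thesis using IH E1 E2 \<open>L = y # L'\<close> by simp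
  qed simp
qed simp

lemma eg_edge: "event_graph V E lab \<Longrightarrow> {a, b} \<in> E \<Longrightarrow> a \<in> V \<and> b \<in> V \<and> a \<noteq> b"
  unfolding event_graph_def by (auto simp: doubleton_eq_iff)

lemma eg_finite: "event_graph V E lab \<Longrightarrow> finite V" and eg_ne: "event_graph V E lab \<Longrightarrow> V \<noteq> {}"
  unfolding event_graph_def by auto

lemma eg_conn: "event_graph V E lab \<Longrightarrow> u \<in> V \<Longrightarrow> v \<in> V \<Longrightarrow> (u, v) \<in> (adj E)\<^sup>*"
  unfolding event_graph_def by auto

lemma univ_mem: "v \<in> V \<Longrightarrow> snd (lab v) \<in> univ V lab"
  by (auto simp: univ_def)

lemma rtrancl_walk:
  assumes eg: "event_graph V E lab" and r: "(u, v) \<in> (adj E)\<^sup>*" and "v \<in> V"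
  shows "\<exists>P. P \<noteq> [] \<and> wk E P \<and> set P \<subseteq> V \<and> hd P = u \<and> last P = v"
  using r
proof (induction rule: converse_rtrancl_induct)
  case base
  then show ?case using \<open>v \<in> V\<close> by (intro exI[of _ "[v]"]) auto
next
  case (step y z)
  then obtain P where P: "P \<noteq> [] \<and> wk E P \<and> set P \<subseteq> V \<and> hd P = z \<and> last P = v" by blast
  have "{y, z} \<in> E" using step(1) by (simp add: adj_def)
  hence "y \<in> V" using eg_edge[OF eg] by blast
  show ?case
    apply (rule exI[of _ "y # P"])
    using P \<open>{y, z} \<in> E\<close> \<open>y \<in> V\<close> by (auto simp: wk_Cons)
qed

lemma short_path:
  assumes eg: "event_graph V E lab" and "u \<in> V" "v \<in> V"
  shows "\<exists>P. is_walk V E P \<and> hd P = u \<and> last P = v \<and> length P \<le> card V"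
proof -
  obtain P where P: "P \<noteq> [] \<and> wk E P \<and> set P \<subseteq> V \<and> hd P = u \<and> last P = v"
    using rtrancl_walk[OF eg eg_conn[OF eg assms(2,3)] assms(3)] by blast
  then obtain Q where Q: "wk E Q \<and> Q \<noteq> [] \<and> hd Q = u \<and> last Q = v \<and> set Q \<subseteq> set P \<and> distinct Q"
    using wk_distinct by metis
  have "length Q = card (set Q)" using Q distinct_card by metis
  also have "\<dots> \<le> card V" using Q P card_mono[OF eg_finite[OF eg]] by (meson order_trans)
  finally show ?thesis using Q P by (auto simp: is_walk_iff)
qed

lemma neighbor:
  assumes eg: "event_graph V E lab" and w: "w \<in> V"
  shows "\<exists>w'. {w', w} \<in> E"
proof -
  have "snd (lab w) \<in> univ V lab" using univ_mem w by metis
  then obtain p q where "p \<in> V" "lab p = (True, snd (lab w))" "q \<in> V" "lab q = (False, snd (lab w))"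
    using eg unfolding event_graph_def by blast
  then have "p \<noteq> q" by auto
  then obtain z where z: "z \<in> V" "z \<noteq> w" using \<open>p \<in> V\<close> \<open>q \<in> V\<close> by blast
  have "(w, z) \<in> (adj E)\<^sup>*" using eg_conn[OF eg w z(1)] .
  then obtain y where "(w, y) \<in> adj E" using z(2) by (cases rule: converse_rtranclE) auto
  then have "{w, y} \<in> E" by (simp add: adj_def)
  then show ?thesis by (metis insert_commute)
qed

lemma cert_props:
  assumes "certifying_walk V E lab v X W"
  shows "W \<noteq> []" "set W \<subseteq> V" "wk E W" "hd W = v" "last W = v"
    "\<And>x. x \<in> univ V lab \<Longrightarrow> filter (\<lambda>w. snd (lab w) = x) W \<noteq> []"
    "\<And>x. x \<in> univ V lab \<Longrightarrow> x \<in> X \<longleftrightarrow> fst (lab (last (filter (\<lambda>w. snd (lab w) = x) W)))"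
  using assms unfolding certifying_walk_def is_walk_iff by (auto simp: filter_empty_conv)

lemma fold_reach:
  assumes eg: "event_graph V E lab" and c: "certifying_walk V E lab w Y W" and Y: "Y \<subseteq> univ V lab"
    and P: "P \<noteq> []" "set P \<subseteq> V" and Z: "Z \<subseteq> univ V lab"
  shows "fold (step lab) (tl (P @ W)) Z = Y"
proof (rule set_eqI)
  fix x
  have tl: "tl (P @ W) = tl P @ W" using P by simp
  show "x \<in> fold (step lab) (tl (P @ W)) Z \<longleftrightarrow> x \<in> Y"
  proof (cases "x \<in> univ V lab")
    case True
    have ne: "filter (\<lambda>w. snd (lab w) = x) W \<noteq> []" using cert_props(6)[OF c True] .
    then have ex: "\<exists>w\<in>set (tl P @ W). snd (lab w) = x" by (auto simp: filter_empty_conv)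
    have "last (filter (\<lambda>w. snd (lab w) = x) (tl P @ W)) = last (filter (\<lambda>w. snd (lab w) = x) W)"
      using ne by simp
    moreover have "x \<in> fold (step lab) (tl P @ W) Z \<longleftrightarrow> fst (lab (last (filter (\<lambda>w. snd (lab w) = x) (tl P @ W))))"
      unfolding fold_step_mem using ex by (simp only: if_True)
    ultimately show ?thesis using cert_props(7)[OF c True] tl by simp
  next
    case False
    have "set (tl P @ W) \<subseteq> V" using P cert_props(2)[OF c] by (auto dest: list.set_sel(2))
    then have "\<not> (\<exists>w\<in>set (tl P @ W). snd (lab w) = x)" using False univ_mem by blast
    then show ?thesis using False Y Z tl by (auto simp: fold_step_mem)
  qed
qed


lemma wk_app2: "wk E A \<Longrightarrow> wk E B \<Longrightarrow> A \<noteq> [] \<Longrightarrow> B \<noteq> [] \<Longrightarrow> {last A, hd B} \<in> E \<Longrightarrow> wk E (A @ B)"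
  using wk_join[of E A "last A # B"] by (simp add: wk_Cons)

lemma cert_cov: "certifying_walk V E lab v X W \<Longrightarrow> x \<in> univ V lab \<Longrightarrow> \<exists>w\<in>set W. snd (lab w) = x"
  unfolding certifying_walk_def by blast

definition Ccert :: "nat set \<Rightarrow> nat set set \<Rightarrow> (nat \<Rightarrow> label) \<Rightarrow> (nat \<times> nat set) set" where
  "Ccert V E lab = {(v, X). (v, X) \<in> dec_nodes V lab \<and> (\<exists>W. certifying_walk V E lab v X W)}"

lemma reach_cert:
  assumes eg: "event_graph V E lab" and a: "(u, Z) \<in> dec_nodes V lab" and b: "(w, Y) \<in> dec_nodes V lab"
    and c: "certifying_walk V E lab w Y W"
  shows "((u, Z), (w, Y)) \<in> (dec_edges V E lab)\<^sup>*"
proof -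
  have u: "u \<in> V" and Z: "Z \<subseteq> univ V lab" using a by (auto simp: dec_nodes_def)
  have w: "w \<in> V" and Y: "Y \<subseteq> univ V lab" using b by (auto simp: dec_nodes_def)
  obtain w' where w': "{w', w} \<in> E" using neighbor[OF eg w] by blast
  hence "w' \<in> V" using eg_edge[OF eg] by blast
  obtain P where P: "is_walk V E P" "hd P = u" "last P = w'" using short_path[OF eg u \<open>w' \<in> V\<close>] by blast
  let ?Q = "P @ W"
  have "wk E ?Q" using P cert_props[OF c] w' by (intro wk_app2) (auto simp: is_walk_iff)
  moreover have "set ?Q \<subseteq> V" "?Q \<noteq> []" using P cert_props[OF c] by (auto simp: is_walk_iff)
  ultimately have "dwk (dec_edges V E lab) (trace lab Z ?Q)" using trace_dwk Z by blast
  then have "(hd (trace lab Z ?Q), last (trace lab Z ?Q)) \<in> (dec_edges V E lab)\<^sup>*"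
    using dwk_rtrancl trace_ne \<open>?Q \<noteq> []\<close> by blast
  moreover have "hd (trace lab Z ?Q) = (u, Z)" using trace_hd \<open>?Q \<noteq> []\<close> P by (auto simp: is_walk_iff)
  moreover have "last (trace lab Z ?Q) = (w, Y)"
    using trace_last[OF \<open>?Q \<noteq> []\<close>] fold_reach[OF eg c Y _ _ Z, of P] P cert_props[OF c]
    by (auto simp: is_walk_iff)
  ultimately show ?thesis by simp
qed

lemma cert_closed:
  assumes eg: "event_graph V E lab" and e: "((u, X), (w, Y)) \<in> dec_edges V E lab"
    and c: "certifying_walk V E lab u X W"
  shows "certifying_walk V E lab w Y (w # W @ [w])"
proof -
  have uw: "{u, w} \<in> E" and Y: "Y = step lab w X" using e by (auto simp: dec_edges_def)
  have w: "w \<in> V" using eg_edge[OF eg uw] by blast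
  have "wk E (W @ tl [u, w])" using cert_props[OF c] uw by (intro wk_join) auto
  hence "wk E (W @ [w])" by simp
  hence "wk E (w # W @ [w])" using cert_props[OF c] uw by (subst wk_Cons) (auto simp: insert_commute)
  moreover have "set (w # W @ [w]) \<subseteq> V" using w cert_props[OF c] by auto
  moreover have cov: "\<forall>x\<in>univ V lab. \<exists>w'\<in>set (w # W @ [w]). snd (lab w') = x"
    using cert_cov[OF c] by fastforce
  moreover have "\<forall>x\<in>univ V lab. x \<in> Y \<longleftrightarrow> fst (lab (last (filter (\<lambda>w'. snd (lab w') = x) (w # W @ [w]))))"
  proof
    fix x assume x: "x \<in> univ V lab"
    show "x \<in> Y \<longleftrightarrow> fst (lab (last (filter (\<lambda>w'. snd (lab w') = x) (w # W @ [w]))))"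
    proof (cases "snd (lab w) = x")
      case True then show ?thesis using Y by (auto simp: step_def)
    next
      case False
      have "filter (\<lambda>w'. snd (lab w') = x) (w # W @ [w]) = filter (\<lambda>w'. snd (lab w') = x) W" using False by simp
      then show ?thesis using False Y cert_props(7)[OF c x] by (auto simp: step_def)
    qed
  qed
  ultimately show ?thesis unfolding certifying_walk_def is_walk_iff by simp
qed

lemma cover_walk:
  assumes eg: "event_graph V E lab"
  shows "S \<subseteq> V \<Longrightarrow> \<exists>W. is_walk V E W \<and> S \<subseteq> set W"
proof (induction S rule: infinite_finite_induct)
  case (infinite S)
  then show ?case using eg_finite[OF eg] finite_subset by blast
next
  case empty
  obtain v where "v \<in> V" using eg_ne[OF eg] by blast
  then show ?case by (intro exI[of _ "[v]"]) (auto simp: is_walk_iff)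
next
  case (insert s S)
  then obtain W where W: "is_walk V E W" "S \<subseteq> set W" by auto
  have "last W \<in> V" using W by (auto simp: is_walk_iff)
  obtain P where P: "is_walk V E P" "hd P = last W" "last P = s"
    using short_path[OF eg \<open>last W \<in> V\<close>] insert by auto
  have "wk E (W @ tl P)" using W P by (intro wk_join) (auto simp: is_walk_iff)
  moreover have "s \<in> set (W @ tl P)"
  proof (cases "tl P = []")
    case True
    then have "P = [hd P]" using P by (cases P) (auto simp: is_walk_iff)
    then have "s = last W" using P by (metis last.simps)
    moreover have "W \<noteq> []" using W by (simp add: is_walk_iff)
    ultimately show ?thesis by simp
  next
    case False
    then have "last (tl P) = s" using P by (cases P) auto
    then show ?thesis using False by auto
  qed
  moreover have "set (W @ tl P) \<subseteq> V" using W P by (auto simp: is_walk_iff dest: list.set_sel(2))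
  ultimately show ?case using W by (intro exI[of _ "W @ tl P"]) (auto simp: is_walk_iff)
qed

lemma exists_cert:
  assumes eg: "event_graph V E lab"
  shows "\<exists>b. b \<in> Ccert V E lab"
proof -
  obtain W where W: "is_walk V E W" "V \<subseteq> set W" using cover_walk[OF eg] by blast
  have "last W \<in> V" "hd W \<in> V" using W by (auto simp: is_walk_iff)
  obtain P where P: "is_walk V E P" "hd P = last W" "last P = hd W"
    using short_path[OF eg \<open>last W \<in> V\<close> \<open>hd W \<in> V\<close>] by blast
  let ?W = "W @ tl P"
  define X0 where "X0 = {x \<in> univ V lab. fst (lab (last (filter (\<lambda>w. snd (lab w) = x) ?W)))}"
  have wk: "wk E ?W" using W P by (intro wk_join) (auto simp: is_walk_iff)
  have lst: "last ?W = hd W"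
  proof (cases "tl P = []")
    case True
    then have "P = [hd P]" using P by (cases P) (auto simp: is_walk_iff)
    then have "hd P = last P" by (metis last.simps)
    then show ?thesis using True P by simp
  next
    case False
    then show ?thesis using P by (cases P) auto
  qed
  have ne: "?W \<noteq> []" using W by (simp add: is_walk_iff)
  have sub: "set ?W \<subseteq> V" using W P by (auto simp: is_walk_iff dest: list.set_sel(2))
  have hd: "hd ?W = hd W" using W by (simp add: is_walk_iff)
  have cov: "\<forall>x\<in>univ V lab. \<exists>w\<in>set ?W. snd (lab w) = x"
    using W(2) unfolding univ_def by fastforce
  have lx: "\<forall>x\<in>univ V lab. x \<in> X0 \<longleftrightarrow> fst (lab (last (filter (\<lambda>w. snd (lab w) = x) ?W)))"
    unfolding X0_def by blast
  have "certifying_walk V E lab (hd W) X0 ?W"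
    unfolding certifying_walk_def is_walk_iff
    using wk lst ne sub hd cov lx by blast
  moreover have "(hd W, X0) \<in> dec_nodes V lab" using \<open>hd W \<in> V\<close> by (auto simp: dec_nodes_def X0_def)
  ultimately show ?thesis unfolding Ccert_def by blast
qed

lemma Ccert_closed:
  assumes eg: "event_graph V E lab"
  shows "(a, b) \<in> (dec_edges V E lab)\<^sup>* \<Longrightarrow> a \<in> Ccert V E lab \<Longrightarrow> b \<in> Ccert V E lab"
proof (induction rule: rtrancl_induct)
  case (step y z)
  obtain u X where y: "y = (u, X)" by force
  obtain w Y where z: "z = (w, Y)" by force
  obtain W where "certifying_walk V E lab u X W" using step y by (auto simp: Ccert_def)
  then have "certifying_walk V E lab w Y (w # W @ [w])" using cert_closed[OF eg] step(2) y z by blast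
  moreover have "z \<in> dec_nodes V lab" using step(2) by (auto simp: dec_edges_def)
  ultimately show ?case using z by (auto simp: Ccert_def)
qed simp

lemma Ccert_sink:
  assumes eg: "event_graph V E lab"
  shows "is_sink_component V E lab (Ccert V E lab)"
proof -
  have "\<forall>a\<in>Ccert V E lab. \<forall>b\<in>Ccert V E lab. (a, b) \<in> (dec_edges V E lab)\<^sup>*"
  proof (intro ballI)
    fix a b assume "a \<in> Ccert V E lab" "b \<in> Ccert V E lab"
    then show "(a, b) \<in> (dec_edges V E lab)\<^sup>*"
      using reach_cert[OF eg] unfolding Ccert_def by auto
  qed
  moreover have "Ccert V E lab \<noteq> {}" using exists_cert[OF eg] by blast
  moreover have "Ccert V E lab \<subseteq> dec_nodes V lab" by (auto simp: Ccert_def)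
  ultimately show ?thesis unfolding is_sink_component_def is_scc_def
    using Ccert_closed[OF eg] by blast
qed

lemma sink_closed:
  assumes C: "is_sink_component V E lab C" and r: "(a, b) \<in> (dec_edges V E lab)\<^sup>*" and a: "a \<in> C"
  shows "b \<in> C"
  using r
proof (induction rule: rtrancl_induct)
  case base then show ?case using a .
next
  case (step y z) then show ?case using C unfolding is_sink_component_def by blast
qed

lemma sink_in_Ccert:
  assumes eg: "event_graph V E lab" and C: "is_sink_component V E lab C" and a: "a \<in> C"
  shows "a \<in> Ccert V E lab"
proof -
  obtain a0 where "a0 \<in> C" using C unfolding is_sink_component_def is_scc_def by blast
  obtain b0 where b0: "b0 \<in> Ccert V E lab" using exists_cert[OF eg] by blast
  have "a0 \<in> dec_nodes V lab" using \<open>a0 \<in> C\<close> C unfolding is_sink_component_def is_scc_def by blast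
  moreover obtain u Z where "a0 = (u, Z)" by force
  moreover obtain w Y W where "b0 = (w, Y)" "b0 \<in> dec_nodes V lab" "certifying_walk V E lab w Y W"
    using b0 unfolding Ccert_def by auto
  ultimately have "(a0, b0) \<in> (dec_edges V E lab)\<^sup>*" using reach_cert[OF eg] by metis
  then have "b0 \<in> C" using sink_closed[OF C] \<open>a0 \<in> C\<close> by blast
  then have "(b0, a) \<in> (dec_edges V E lab)\<^sup>*" using a C unfolding is_sink_component_def is_scc_def by blast
  then show ?thesis using Ccert_closed[OF eg] b0 by blast
qed


lemma shorten:
  "wk E W \<Longrightarrow> W \<noteq> [] \<Longrightarrow> okf g e W \<Longrightarrow>
   \<exists>W'. wk E W' \<and> W' \<noteq> [] \<and> okf g e W' \<and> set W' = set W \<and> last W' = last W \<and> length W' \<le> card (set W) ^ 2"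
proof (induction W)
  case Nil then show ?case by simp
next
  case (Cons w ws)
  show ?case
  proof (cases "ws = []")
    case True
    then show ?thesis using Cons.prems by (intro exI[of _ "[w]"]) auto
  next
    case False
    have wws: "wk E ws" "{w, hd ws} \<in> E" using Cons.prems(1) False wk_Cons by blast+
    have ows: "okf g e ws" using Cons.prems(3) by simp
    obtain ws' where ws': "wk E ws'" "ws' \<noteq> []" "okf g e ws'" "set ws' = set ws" "last ws' = last ws"
      "length ws' \<le> card (set ws) ^ 2"
      using Cons.IH[OF wws(1) False ows] by blast
    show ?thesis
    proof (cases "w \<in> set ws")
      case True
      then have "set (w # ws) = set ws" by auto
      moreover have "last (w # ws) = last ws" using False by simp
      ultimately show ?thesis using ws' by metis
    next
      case wn: False
      have "hd ws' \<in> set ws" using ws' by (metis hd_in_set)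
      then obtain i where i: "i < length ws" "ws ! i = hd ws'" by (metis in_set_conv_nth)
      let ?Q0 = "take (Suc i) ws"
      have "wk E ?Q0" using wk_take wws(1) by blast
      moreover have "?Q0 \<noteq> []" using False by simp
      ultimately obtain Q where Q: "wk E Q" "Q \<noteq> []" "hd Q = hd ?Q0" "last Q = last ?Q0" "set Q \<subseteq> set ?Q0" "distinct Q"
        using wk_distinct by metis
      have hdQ: "hd Q = hd ws" using Q(3) False by (simp add: hd_take)
      have lastQ: "last Q = hd ws'" using Q(4) i by (simp add: take_Suc_conv_app_nth)
      have setQ: "set Q \<subseteq> set ws" using Q(5) set_take_subset by fastforce
      have lenQ: "length Q \<le> card (set ws)" using Q(6) setQ distinct_card card_mono by (metis List.finite_set)
      let ?R = "butlast Q @ ws'"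
      have R_eq: "Q @ tl ws' = ?R"
        using Q(2) ws'(2) lastQ by (metis append_butlast_last_id append_Cons append_assoc append_self_conv2 list.collapse)
      have "wk E (Q @ tl ws')" using Q ws' lastQ by (intro wk_join) auto
      hence wkR: "wk E ?R" using R_eq by simp
      have hdR: "hd ?R = hd ws"
        using hdQ R_eq Q(2) by (metis hd_append2)
      have wkW: "wk E (w # ?R)" using wkR hdR wws(2) ws'(2) by (subst wk_Cons) auto
      have okR: "okf g e ?R"
        using ws'(3) apply (rule okf_prefix)
        using setQ ws'(4) by (auto dest: in_set_butlastD)
      have "g w \<or> (\<exists>u\<in>set ws. e u = e w \<and> g u)" using Cons.prems(3) by simp
      hence okW: "okf g e (w # ?R)" using okR ws'(4) by auto
      have setW: "set (w # ?R) = set (w # ws)" using setQ ws'(4) by (auto dest: in_set_butlastD)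
      have lastW: "last (w # ?R) = last (w # ws)" using ws' False by simp
      have "length (w # ?R) = 1 + (length Q - 1) + length ws'" by simp
      also have "\<dots> \<le> card (set ws) + card (set ws) ^ 2" using lenQ ws'(6) Q(2) by (cases Q) auto
      also have "\<dots> \<le> card (set (w # ws)) ^ 2" using wn by (simp add: power2_eq_square)
      finally show ?thesis using wkW okW setW lastW by blast
    qed
  qed
qed

lemma cert_short:
  assumes eg: "event_graph V E lab" and c: "certifying_walk V E lab v X W"
  shows "\<exists>W'. certifying_walk V E lab v X W' \<and> length W' \<le> 2 * card V ^ 2"
proof -
  define g where "g = (\<lambda>w. (snd (lab w) \<in> X \<longleftrightarrow> fst (lab w)))"
  define e where "e = (\<lambda>w. snd (lab w))"
  note cp = cert_props[OF c]
  have "okf g e W"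
  proof (rule last_okf, rule ballI)
    fix w assume w: "w \<in> set W"
    let ?x = "snd (lab w)"
    have x: "?x \<in> univ V lab" using w cp(2) univ_mem by blast
    let ?u = "last (filter (\<lambda>u. e u = e w) W)"
    have "filter (\<lambda>u. e u = e w) W \<noteq> []" using cp(6)[OF x] by (simp add: e_def)
    then have "?u \<in> set (filter (\<lambda>u. e u = e w) W)" using last_in_set by blast
    then have "e ?u = ?x" by (simp add: e_def)
    moreover have "?x \<in> X \<longleftrightarrow> fst (lab ?u)" using cp(7)[OF x] by (simp add: e_def)
    ultimately show "g ?u" by (simp add: g_def e_def)
  qed
  then obtain W1 where W1: "wk E W1" "W1 \<noteq> []" "okf g e W1" "set W1 = set W" "last W1 = last W"
    "length W1 \<le> card (set W) ^ 2"
    using shorten cp(1,3) by metis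
  have fin: "finite V" using eg_finite[OF eg] .
  have "card (set W) \<le> card V" using cp(2) card_mono fin by blast
  hence len1: "length W1 \<le> card V ^ 2" using W1(6) by (meson le_trans power_mono zero_le)
  have "v \<in> V" using cp(1,2,4) by (metis hd_in_set subsetD)
  moreover have "hd W1 \<in> V" using W1(2,4) cp(2) by (metis hd_in_set subsetD)
  ultimately obtain P where P: "is_walk V E P" "hd P = v" "last P = hd W1" "length P \<le> card V"
    using short_path[OF eg] by blast
  have Pne: "P \<noteq> []" using P(1) by (simp add: is_walk_iff)
  let ?W = "butlast P @ W1"
  have eqW: "P @ tl W1 = ?W"
    using Pne W1(2) P(3) by (metis append_butlast_last_id append_Cons append_assoc append_self_conv2 list.collapse)
  have wkW: "wk E ?W" using wk_join[of E P W1] P W1 Pne eqW by (simp add: is_walk_iff)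
  have setW: "set ?W \<subseteq> V" using P(1) W1(4) cp(2) by (auto simp: is_walk_iff dest: in_set_butlastD)
  have neW: "?W \<noteq> []" using W1(2) by simp
  have hdW: "hd ?W = v"
  proof (cases "butlast P = []")
    case True
    then have "P = [last P]" using Pne by (metis append_butlast_last_id append_Nil)
    then have "hd W1 = v" using P(2,3) by (metis list.sel(1))
    then show ?thesis using True by simp
  next
    case False
    then show ?thesis using P(2) Pne by (metis append_butlast_last_id hd_append2)
  qed
  have lastW: "last ?W = v" using W1(2,5) cp(5) by simp
  have okW: "okf g e ?W"
    using W1(3) apply (rule okf_prefix)
  proof
    fix y assume "y \<in> set (butlast P)"
    then have "y \<in> V" using P(1) by (auto simp: is_walk_iff dest: in_set_butlastD)
    then have "e y \<in> univ V lab" using univ_mem by (simp add: e_def)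
    then obtain u where "u \<in> set W" "snd (lab u) = e y" using cert_cov[OF c] by blast
    then show "\<exists>u\<in>set W1. e u = e y" using W1(4) by (auto simp: e_def)
  qed
  have cov: "\<forall>x\<in>univ V lab. \<exists>w\<in>set ?W. snd (lab w) = x" using cert_cov[OF c] W1(4) by fastforce
  have lx: "\<forall>x\<in>univ V lab. x \<in> X \<longleftrightarrow> fst (lab (last (filter (\<lambda>w. snd (lab w) = x) ?W)))"
  proof
    fix x assume "x \<in> univ V lab"
    then have ne: "filter (\<lambda>w. e w = x) ?W \<noteq> []" using cov by (auto simp: e_def filter_empty_conv)
    let ?u = "last (filter (\<lambda>w. e w = x) ?W)"
    have "g ?u" using okf_last[OF okW ne] .
    moreover have "?u \<in> set (filter (\<lambda>w. e w = x) ?W)" using ne last_in_set by blast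
    then have "e ?u = x" by (metis (mono_tags, lifting) mem_Collect_eq set_filter)
    ultimately show "x \<in> X \<longleftrightarrow> fst (lab (last (filter (\<lambda>w. snd (lab w) = x) ?W)))"
      by (simp add: g_def e_def)
  qed
  have "certifying_walk V E lab v X ?W"
    unfolding certifying_walk_def is_walk_iff using wkW setW neW hdW lastW cov lx by blast
  moreover have "length ?W \<le> 2 * card V ^ 2"
  proof -
    have "length ?W \<le> card V + card V ^ 2" using P(4) len1 by simp
    moreover have "card V \<le> card V ^ 2" by (simp add: power2_eq_square)
    ultimately show ?thesis by simp
  qed
  ultimately show ?thesis by blast
qed

lemma partA:
  assumes eg: "event_graph V E lab" and C: "is_sink_component V E lab C" and vX: "(v, X) \<in> C"
  shows "\<exists>W. certifying_walk V E lab v X W \<and> length W \<le> 2 * card V ^ 2"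
proof -
  have "(v, X) \<in> Ccert V E lab" using sink_in_Ccert[OF eg C vX] .
  then obtain W where "certifying_walk V E lab v X W" unfolding Ccert_def by blast
  then show ?thesis using cert_short[OF eg] by blast
qed

lemma partA2:
  assumes eg: "event_graph V E lab" and C: "is_sink_component V E lab C" and a: "a \<in> C" and b: "b \<in> C"
  shows "\<exists>L. is_dwalk (dec_edges V E lab) L \<and> set L \<subseteq> C \<and> hd L = a \<and> last L = b \<and> length L \<le> 3 * card V ^ 2"
proof -
  obtain u Z where aa: "a = (u, Z)" by force
  obtain w Y where bb: "b = (w, Y)" by force
  have Cd: "C \<subseteq> dec_nodes V lab" using C unfolding is_sink_component_def is_scc_def by blast
  have u: "u \<in> V" and Z: "Z \<subseteq> univ V lab" using a aa Cd by (auto simp: dec_nodes_def)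
  have w: "w \<in> V" and Y: "Y \<subseteq> univ V lab" using b bb Cd by (auto simp: dec_nodes_def)
  obtain W where c: "certifying_walk V E lab w Y W" and lenW: "length W \<le> 2 * card V ^ 2"
    using partA[OF eg C] b bb by blast
  obtain w' where w': "{w', w} \<in> E" using neighbor[OF eg w] by blast
  hence "w' \<in> V" using eg_edge[OF eg] by blast
  obtain P where P: "is_walk V E P" "hd P = u" "last P = w'" "length P \<le> card V"
    using short_path[OF eg u \<open>w' \<in> V\<close>] by blast
  let ?Q = "P @ W"
  have "wk E ?Q" using P cert_props[OF c] w' by (intro wk_app2) (auto simp: is_walk_iff)
  moreover have "set ?Q \<subseteq> V" "?Q \<noteq> []" using P cert_props[OF c] by (auto simp: is_walk_iff)
  ultimately have dw: "dwk (dec_edges V E lab) (trace lab Z ?Q)" using trace_dwk Z by blast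
  have hdL: "hd (trace lab Z ?Q) = a" using trace_hd \<open>?Q \<noteq> []\<close> P aa by (auto simp: is_walk_iff)
  have lastL: "last (trace lab Z ?Q) = b"
    using trace_last[OF \<open>?Q \<noteq> []\<close>] fold_reach[OF eg c Y _ _ Z, of P] P cert_props[OF c] bb
    by (auto simp: is_walk_iff)
  have neL: "trace lab Z ?Q \<noteq> []" using trace_ne \<open>?Q \<noteq> []\<close> by blast
  have setL: "set (trace lab Z ?Q) \<subseteq> C"
    using dwk_closed[OF dw neL] hdL a C unfolding is_sink_component_def by blast
  have "length (trace lab Z ?Q) \<le> 3 * card V ^ 2"
  proof -
    have "length (trace lab Z ?Q) \<le> card V + 2 * card V ^ 2" using trace_length P(4) lenW by simp
    moreover have "card V \<le> card V ^ 2" by (simp add: power2_eq_square)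
    ultimately show ?thesis by simp
  qed
  then show ?thesis using dw neL hdL lastL setL unfolding is_dwalk_iff by blast
qed


definition valid :: "nat \<Rightarrow> nat \<Rightarrow> bool" where
  "valid a b \<longleftrightarrow> a = b \<or> (a = Suc b \<and> even b) \<or> (b = Suc a \<and> odd a)"

definition loc :: "nat \<Rightarrow> nat \<Rightarrow> int" where
  "loc m s = (if s mod 4 = 0 \<or> s mod 4 = 1 then int m - int ((s + 1) div 2) else int m + int ((s + 1) div 2))"

fun TT :: "nat \<Rightarrow> nat \<Rightarrow> int" where
  "TT m 0 = 0"
| "TT m (Suc s) = TT m s + \<bar>loc m (Suc s) - loc m s\<bar>"

lemma tranA:
  assumes "valid a b" "even (Suc a) \<Longrightarrow> Suc a \<le> b"
  shows "valid (Suc a) b \<and> loc m (Suc a + b) = int m - int (Suc a)"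
proof -
  have v: "a = b \<and> even a \<or> (b = Suc a \<and> odd a)" using assms unfolding valid_def by presburger
  then have "valid (Suc a) b" unfolding valid_def by presburger
  moreover have "(Suc a + b) mod 4 = 0 \<or> (Suc a + b) mod 4 = 1" using v by presburger
  moreover have "(Suc a + b + 1) div 2 = Suc a" using v by presburger
  ultimately show ?thesis unfolding loc_def by simp
qed

lemma tranB:
  assumes "valid a b" "odd (Suc b) \<Longrightarrow> Suc b \<le> a"
  shows "valid a (Suc b) \<and> loc m (a + Suc b) = int m + int (Suc b)"
proof -
  have v: "a = b \<and> odd b \<or> (a = Suc b \<and> even b)" using assms unfolding valid_def by presburger
  then have "valid a (Suc b)" unfolding valid_def by presburger
  moreover have "\<not> ((a + Suc b) mod 4 = 0 \<or> (a + Suc b) mod 4 = 1)" using v by presburger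
  moreover have "(a + Suc b + 1) div 2 = Suc b" using v by presburger
  ultimately show ?thesis unfolding loc_def by simp
qed

lemma loc_gap: "\<bar>loc m (Suc (Suc (2*J))) - loc m (Suc (2*J))\<bar> = 2 * int J + 2"
proof -
  have d1: "(Suc (Suc (2*J)) + 1) div 2 = Suc J" "(Suc (2*J) + 1) div 2 = Suc J" by presburger+
  show ?thesis
  proof (cases "even J")
    case True
    then have "Suc (2*J) mod 4 = 1" "Suc (Suc (2*J)) mod 4 = 2" by presburger+
    then show ?thesis unfolding loc_def d1 by simp
  next
    case False
    then have "Suc (2*J) mod 4 = 3" "Suc (Suc (2*J)) mod 4 = 0" by presburger+
    then show ?thesis unfolding loc_def d1 by simp
  qed
qed

lemma TT_mono: "s \<le> s' \<Longrightarrow> TT m s \<le> TT m s'"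
  by (induction s' rule: dec_induct) auto

lemma TT_even: "int (J * (J + 1)) \<le> TT m (2 * J)"
proof (induction J)
  case (Suc J)
  have "TT m (2 * Suc J) = TT m (Suc (2*J)) + (2 * int J + 2)"
    using loc_gap[of m J] by simp
  moreover have "TT m (2 * J) \<le> TT m (Suc (2*J))" using TT_mono by simp
  ultimately show ?case using Suc by (simp add: algebra_simps)
qed simp


lemma lab_left: "p < m \<Longrightarrow> pathLab m p = (True, m - p)" by (simp add: pathLab_def)
lemma lab_mid: "pathLab m m = (False, m)" by (simp add: pathLab_def)
lemma lab_right: "m < p \<Longrightarrow> pathLab m p = (False, p - m)" by (simp add: pathLab_def)

lemma pe: "{a, b} \<in> pathE m \<Longrightarrow> (b = Suc a \<and> Suc a \<le> 2*m) \<or> (a = Suc b \<and> Suc b \<le> 2*m)"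
  by (auto simp: pathE_def doubleton_eq_iff)

lemma pe_intro: "i < 2*m \<Longrightarrow> {i, Suc i} \<in> pathE m" "i < 2*m \<Longrightarrow> {Suc i, i} \<in> pathE m"
  by (auto simp: pathE_def insert_commute)

lemma univ_path: "1 \<le> m \<Longrightarrow> univ (pathV m) (pathLab m) = {1..m}"
proof (rule set_eqI)
  fix x assume m: "1 \<le> m"
  show "x \<in> univ (pathV m) (pathLab m) \<longleftrightarrow> x \<in> {1..m}"
  proof
    assume "x \<in> univ (pathV m) (pathLab m)"
    then obtain p where "p \<le> 2*m" "x = snd (pathLab m p)" by (auto simp: univ_def pathV_def)
    then show "x \<in> {1..m}" using m by (auto simp: pathLab_def)
  next
    assume "x \<in> {1..m}"
    then have "m + x \<in> pathV m" "snd (pathLab m (m + x)) = x" by (auto simp: pathV_def pathLab_def)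
    then show "x \<in> univ (pathV m) (pathLab m)" unfolding univ_def by force
  qed
qed

lemma path_conn: "k + i \<le> 2*m \<Longrightarrow> (i, i + k) \<in> (adj (pathE m))\<^sup>* \<and> (i + k, i) \<in> (adj (pathE m))\<^sup>*"
proof (induction k)
  case (Suc k)
  then have "(i + k, Suc (i + k)) \<in> adj (pathE m)" "(Suc (i + k), i + k) \<in> adj (pathE m)"
    using pe_intro[of "i + k" m] by (auto simp: adj_def)
  then show ?case using Suc by (auto intro: rtrancl_into_rtrancl converse_rtrancl_into_rtrancl)
qed simp

lemma eg_path: "1 \<le> m \<Longrightarrow> event_graph (pathV m) (pathE m) (pathLab m)"
proof -
  assume m: "1 \<le> m"
  have "finite (pathV m)" "pathV m \<noteq> {}" by (auto simp: pathV_def)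
  moreover have "pathE m \<subseteq> {{u, v} | u v. u \<in> pathV m \<and> v \<in> pathV m \<and> u \<noteq> v}"
  proof
    fix e assume "e \<in> pathE m"
    then obtain i where "e = {i, Suc i}" "i < 2*m" by (auto simp: pathE_def)
    moreover have "i \<in> pathV m" "Suc i \<in> pathV m" "i \<noteq> Suc i" using \<open>i < 2*m\<close> by (auto simp: pathV_def)
    ultimately show "e \<in> {{u, v} | u v. u \<in> pathV m \<and> v \<in> pathV m \<and> u \<noteq> v}" by blast
  qed
  moreover have "\<forall>u\<in>pathV m. \<forall>v\<in>pathV m. (u, v) \<in> (adj (pathE m))\<^sup>*"
  proof (intro ballI)
    fix u v assume "u \<in> pathV m" "v \<in> pathV m"
    then have "u \<le> 2*m" "v \<le> 2*m" by (auto simp: pathV_def)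
    show "(u, v) \<in> (adj (pathE m))\<^sup>*"
    proof (cases "u \<le> v")
      case True then show ?thesis using path_conn[of "v - u" u m] \<open>v \<le> 2*m\<close> by simp
    next
      case False then show ?thesis using path_conn[of "u - v" v m] \<open>u \<le> 2*m\<close> by simp
    qed
  qed
  moreover have "\<forall>x\<in>univ (pathV m) (pathLab m). (\<exists>v\<in>pathV m. pathLab m v = (True, x)) \<and> (\<exists>v\<in>pathV m. pathLab m v = (False, x))"
  proof
    fix x assume "x \<in> univ (pathV m) (pathLab m)"
    then have x: "1 \<le> x" "x \<le> m" using univ_path[OF m] by auto
    have "m - x \<in> pathV m" "pathLab m (m - x) = (True, x)" using x by (auto simp: pathV_def pathLab_def)
    moreover have "m + x \<in> pathV m" "pathLab m (m + x) = (False, x)" using x by (auto simp: pathV_def pathLab_def)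
    ultimately show "(\<exists>v\<in>pathV m. pathLab m v = (True, x)) \<and> (\<exists>v\<in>pathV m. pathLab m v = (False, x))" by blast
  qed
  ultimately show ?thesis unfolding event_graph_def by blast
qed

abbreviation "RR m \<equiv> dec_edges (pathV m) (pathE m) (pathLab m)"

lemma pedge:
  assumes "1 \<le> m" "p \<le> 2*m" "q \<le> 2*m" "{p, q} \<in> pathE m" "S \<subseteq> {1..m}"
  shows "((p, S), (q, step (pathLab m) q S)) \<in> RR m"
proof -
  have "step (pathLab m) q S \<subseteq> {1..m}"
    using step_sub[of q "pathV m" S "pathLab m"] assms univ_path by (auto simp: pathV_def)
  then show ?thesis using assms univ_path by (auto simp: dec_edges_def dec_nodes_def pathV_def)
qed

lemma right_out: "1 \<le> m \<Longrightarrow> j \<le> m \<Longrightarrow> S \<subseteq> {1..m} \<Longrightarrow> ((m, S), (m + j, S - {1..j})) \<in> (RR m)\<^sup>*"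
proof (induction j)
  case (Suc j)
  have "((m + j, S - {1..j}), (Suc (m + j), step (pathLab m) (Suc (m + j)) (S - {1..j}))) \<in> RR m"
    using Suc.prems by (intro pedge pe_intro) auto
  moreover have "step (pathLab m) (Suc (m + j)) (S - {1..j}) = S - {1..Suc j}"
    by (auto simp: step_def lab_right)
  ultimately show ?case using Suc by (auto intro: rtrancl_into_rtrancl)
qed simp

lemma right_back: "1 \<le> m \<Longrightarrow> Suc k \<le> m \<Longrightarrow> T \<subseteq> {1..m} \<Longrightarrow> T \<inter> {1..Suc k} = {} \<Longrightarrow>
   ((m + Suc k, T), (m + 1, T)) \<in> (RR m)\<^sup>*"
proof (induction k)
  case (Suc k)
  have "((m + Suc (Suc k), T), (m + Suc k, step (pathLab m) (m + Suc k) T)) \<in> RR m"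
    using Suc.prems pe_intro(2)[of "m + Suc k" m] by (intro pedge) auto
  moreover have "step (pathLab m) (m + Suc k) T = T" using Suc.prems by (auto simp: step_def lab_right)
  moreover have "T \<inter> {1..Suc k} = {}" using Suc.prems by auto
  then have "((m + Suc k, T), (m + 1, T)) \<in> (RR m)\<^sup>*" using Suc by simp
  ultimately show ?case by (metis converse_rtrancl_into_rtrancl)
qed simp

lemma R_move: "1 \<le> y \<Longrightarrow> y \<le> m \<Longrightarrow> S \<subseteq> {1..m} \<Longrightarrow> ((m, S), (m, S - {1..y} - {m})) \<in> (RR m)\<^sup>*"
proof -
  assume a: "1 \<le> y" "y \<le> m" "S \<subseteq> {1..m}"
  obtain k where k: "y = Suc k" using a by (cases y) auto
  have "((m, S), (m + y, S - {1..y})) \<in> (RR m)\<^sup>*" using right_out a by auto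
  moreover have "((m + y, S - {1..y}), (m + 1, S - {1..y})) \<in> (RR m)\<^sup>*"
    using right_back[of m k "S - {1..y}"] a k by auto
  moreover have "((m + 1, S - {1..y}), (m, step (pathLab m) m (S - {1..y}))) \<in> RR m"
    using a pe_intro(2)[of m m] by (intro pedge) auto
  moreover have "step (pathLab m) m (S - {1..y}) = S - {1..y} - {m}" by (simp add: step_def lab_mid)
  ultimately show ?thesis by (metis rtrancl_trans rtrancl_into_rtrancl)
qed

lemma left_out: "1 \<le> m \<Longrightarrow> j \<le> m \<Longrightarrow> S \<subseteq> {1..m} \<Longrightarrow> ((m, S), (m - j, S \<union> {1..j})) \<in> (RR m)\<^sup>*"
proof (induction j)
  case (Suc j)
  have "((m - j, S \<union> {1..j}), (m - Suc j, step (pathLab m) (m - Suc j) (S \<union> {1..j}))) \<in> RR m"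
    using Suc.prems pe_intro(2)[of "m - Suc j" m] by (intro pedge) (auto simp: Suc_diff_Suc)
  moreover have "step (pathLab m) (m - Suc j) (S \<union> {1..j}) = S \<union> {1..Suc j}"
    using Suc.prems by (auto simp: step_def lab_left)
  ultimately show ?case using Suc by (auto intro: rtrancl_into_rtrancl)
qed simp

lemma left_back: "1 \<le> m \<Longrightarrow> Suc k \<le> m \<Longrightarrow> T \<subseteq> {1..m} \<Longrightarrow> {1..Suc k} \<subseteq> T \<Longrightarrow>
   ((m - Suc k, T), (m - 1, T)) \<in> (RR m)\<^sup>*"
proof (induction k)
  case (Suc k)
  have "((m - Suc (Suc k), T), (m - Suc k, step (pathLab m) (m - Suc k) T)) \<in> RR m"
    using Suc.prems pe_intro(1)[of "m - Suc (Suc k)" m] by (intro pedge) (auto simp: Suc_diff_Suc)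
  moreover have "step (pathLab m) (m - Suc k) T = T" using Suc.prems by (auto simp: step_def lab_left)
  moreover have "{1..Suc k} \<subseteq> T" using Suc.prems by auto
  then have "((m - Suc k, T), (m - 1, T)) \<in> (RR m)\<^sup>*" using Suc by simp
  ultimately show ?case by (metis converse_rtrancl_into_rtrancl)
qed simp

lemma L_move: "1 \<le> x \<Longrightarrow> x \<le> m \<Longrightarrow> S \<subseteq> {1..m} \<Longrightarrow> ((m, S), (m, (S \<union> {1..x}) - {m})) \<in> (RR m)\<^sup>*"
proof -
  assume a: "1 \<le> x" "x \<le> m" "S \<subseteq> {1..m}"
  obtain k where k: "x = Suc k" using a by (cases x) auto
  have "((m, S), (m - x, S \<union> {1..x})) \<in> (RR m)\<^sup>*" using left_out a by auto
  moreover have "((m - x, S \<union> {1..x}), (m - 1, S \<union> {1..x})) \<in> (RR m)\<^sup>*"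
    using left_back[of m k "S \<union> {1..x}"] a k by auto
  moreover have "((m - 1, S \<union> {1..x}), (m, step (pathLab m) m (S \<union> {1..x}))) \<in> RR m"
    using a pe_intro(1)[of "m - 1" m] by (intro pedge) auto
  moreover have "step (pathLab m) m (S \<union> {1..x}) = (S \<union> {1..x}) - {m}" by (simp add: step_def lab_mid)
  ultimately show ?thesis by (metis rtrancl_trans rtrancl_into_rtrancl)
qed

lemma pathY_eq: "pathY m = {y. odd y \<and> y < m}"
proof (rule set_eqI)
  fix y
  show "y \<in> pathY m \<longleftrightarrow> y \<in> {y. odd y \<and> y < m}"
  proof
    assume "y \<in> pathY m"
    then obtain k where "y = 2*k+1" "k < m div 2" by (auto simp: pathY_def)
    then show "y \<in> {y. odd y \<and> y < m}" by (simp; presburger)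
  next
    assume "y \<in> {y. odd y \<and> y < m}"
    then obtain k where "y = 2*k+1" "y < m" by (auto elim!: oddE)
    then have "k < m div 2" by presburger
    then show "y \<in> pathY m" using \<open>y = 2*k+1\<close> by (auto simp: pathY_def)
  qed
qed

definition Yk :: "nat \<Rightarrow> nat \<Rightarrow> nat set" where
  "Yk m x = {y. odd y \<and> x < y \<and> y < m} \<union> (if odd x then {1..x} else {})"

lemma Yk_sub: "x < m \<Longrightarrow> Yk m x \<subseteq> {1..m}"
  by (auto simp: Yk_def)

lemma reach_Yk: "2 \<le> m \<Longrightarrow> d \<le> m - 2 \<Longrightarrow> ((m, {}), (m, Yk m (m - 1 - d))) \<in> (RR m)\<^sup>*"
proof (induction d)
  case 0
  show ?case
  proof (cases "odd (m - 1)")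
    case True
    have eq: "(({} \<union> {1..m - 1}) - {m}) = Yk m (m - 1)" using True by (auto simp: Yk_def)
    have "((m, {}), (m, ({} \<union> {1..m - 1}) - {m})) \<in> (RR m)\<^sup>*" using 0 by (intro L_move) auto
    then have "((m, {}), (m, Yk m (m - 1))) \<in> (RR m)\<^sup>*" by (simp only: eq)
    then show ?thesis by simp
  next
    case False
    have "Yk m (m - 1) = {}" using False by (auto simp: Yk_def)
    then show ?thesis by simp
  qed
next
  case (Suc d)
  let ?x = "m - 1 - d"
  have x2: "2 \<le> ?x" "?x < m" using Suc.prems by auto
  have IH: "((m, {}), (m, Yk m ?x)) \<in> (RR m)\<^sup>*" using Suc by auto
  have sub: "Yk m ?x \<subseteq> {1..m}" using Yk_sub x2 by blast
  have eqx: "m - 1 - Suc d = ?x - 1" by simp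
  show ?case
  proof (cases "odd ?x")
    case True
    have "Yk m ?x - {1..?x - 1} - {m} = Yk m (?x - 1)"
      using True x2 unfolding Yk_def by (auto; presburger)
    moreover have "((m, Yk m ?x), (m, Yk m ?x - {1..?x - 1} - {m})) \<in> (RR m)\<^sup>*"
      using R_move[of "?x - 1" m "Yk m ?x"] x2 sub by auto
    ultimately show ?thesis using IH eqx by (metis rtrancl_trans)
  next
    case False
    have "(Yk m ?x \<union> {1..?x - 1}) - {m} = Yk m (?x - 1)"
      using False x2 unfolding Yk_def by (auto; presburger)
    moreover have "((m, Yk m ?x), (m, (Yk m ?x \<union> {1..?x - 1}) - {m})) \<in> (RR m)\<^sup>*"
      using L_move[of "?x - 1" m "Yk m ?x"] x2 sub by auto
    ultimately show ?thesis using IH eqx by (metis rtrancl_trans)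
  qed
qed

lemma Yk1: "2 \<le> m \<Longrightarrow> Yk m 1 = pathY m"
  unfolding pathY_eq Yk_def by (auto; presburger)

lemma fold_sub: "set ws \<subseteq> V \<Longrightarrow> Z \<subseteq> univ V lab \<Longrightarrow> fold (step lab) ws Z \<subseteq> univ V lab"
  by (induction ws arbitrary: Z) (auto simp: step_sub)

lemma reach_node:
  assumes eg: "event_graph V E lab" and a: "(u, Z) \<in> dec_nodes V lab" and v: "v \<in> V"
  shows "\<exists>Z'. ((u, Z), (v, Z')) \<in> (dec_edges V E lab)\<^sup>* \<and> Z' \<subseteq> univ V lab"
proof -
  have u: "u \<in> V" and Z: "Z \<subseteq> univ V lab" using a by (auto simp: dec_nodes_def)
  obtain P where P: "is_walk V E P" "hd P = u" "last P = v" using short_path[OF eg u v] by blast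
  have ne: "P \<noteq> []" "set P \<subseteq> V" "wk E P" using P by (auto simp: is_walk_iff)
  have "dwk (dec_edges V E lab) (trace lab Z P)" using trace_dwk ne Z by blast
  then have "(hd (trace lab Z P), last (trace lab Z P)) \<in> (dec_edges V E lab)\<^sup>*"
    using dwk_rtrancl trace_ne ne by blast
  moreover have "fold (step lab) (tl P) Z \<subseteq> univ V lab"
    using fold_sub ne Z by (metis list.set_sel(2) subsetD subsetI)
  ultimately show ?thesis using trace_hd trace_last ne P by metis
qed

lemma path_sink:
  assumes m: "2 \<le> m"
  shows "\<exists>C. is_sink_component (pathV m) (pathE m) (pathLab m) C \<and> (m, {}) \<in> C \<and> (m, pathY m) \<in> C"
proof -
  have eg: "event_graph (pathV m) (pathE m) (pathLab m)" using eg_path m by simp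
  let ?C = "Ccert (pathV m) (pathE m) (pathLab m)"
  obtain b0 where b0: "b0 \<in> ?C" using exists_cert[OF eg] by blast
  obtain u Z where bz: "b0 = (u, Z)" by force
  have "(u, Z) \<in> dec_nodes (pathV m) (pathLab m)" using b0 bz by (auto simp: Ccert_def)
  moreover have "m \<in> pathV m" by (simp add: pathV_def)
  ultimately obtain Z' where Z': "((u, Z), (m, Z')) \<in> (RR m)\<^sup>*" "Z' \<subseteq> univ (pathV m) (pathLab m)"
    using reach_node[OF eg] by blast
  have Z'u: "Z' \<subseteq> {1..m}" using Z'(2) univ_path m by simp
  have "((m, Z'), (m, Z' - {1..m} - {m})) \<in> (RR m)\<^sup>*" using R_move[of m m Z'] m Z'u by simp
  moreover have "Z' - {1..m} - {m} = {}" using Z'u by auto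
  ultimately have r0: "(b0, (m, {})) \<in> (RR m)\<^sup>*" using Z'(1) bz by (metis rtrancl_trans)
  have "(m, {}) \<in> ?C" using Ccert_closed[OF eg r0 b0] .
  moreover have "((m, {}), (m, pathY m)) \<in> (RR m)\<^sup>*"
    using reach_Yk[of m "m - 2"] m Yk1[of m] by (simp add: numeral_2_eq_2)
  ultimately have "(m, pathY m) \<in> ?C" using Ccert_closed[OF eg] by blast
  then show ?thesis using Ccert_sink[OF eg] \<open>(m, {}) \<in> ?C\<close> by blast
qed


fun aL :: "nat \<Rightarrow> nat list \<Rightarrow> nat" where
  "aL m [] = 0"
| "aL m (w # ws) = max (m - w) (aL m ws)"

fun bR :: "nat \<Rightarrow> nat list \<Rightarrow> nat" where
  "bR m [] = 0"
| "bR m (w # ws) = max (w - m) (bR m ws)"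

lemma aL_mem: "p \<in> set ws \<Longrightarrow> m - p \<le> aL m ws \<and> p - m \<le> bR m ws"
  by (induction ws) auto

definition eY :: "nat \<Rightarrow> nat \<Rightarrow> nat" where "eY m w = snd (pathLab m w)"
definition gY :: "nat \<Rightarrow> nat \<Rightarrow> bool" where "gY m w = (snd (pathLab m w) \<in> pathY m \<longleftrightarrow> fst (pathLab m w))"

lemma pot_same:
  "\<bar>int w - int h\<bar> = 1 \<Longrightarrow> 1 + TT m s + \<bar>int h - loc m s\<bar> \<le> L \<Longrightarrow> 1 + TT m s + \<bar>int w - loc m s\<bar> \<le> L + 1"
  by arith

lemma pot_step:
  "\<bar>int w - int h\<bar> = 1 \<Longrightarrow> 1 + TT m s + \<bar>int h - loc m s\<bar> \<le> L \<Longrightarrow> loc m (Suc s) = int w \<Longrightarrow>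
   1 + TT m (Suc s) + \<bar>int w - loc m (Suc s)\<bar> \<le> L + 1"
  by simp

lemma pot:
  assumes m: "2 \<le> m"
  shows "wk (pathE m) W \<Longrightarrow> W \<noteq> [] \<Longrightarrow> last W = m \<Longrightarrow> okf (gY m) (eY m) W \<Longrightarrow>
    valid (min (aL m W) (m - 1)) (min (bR m W) (m - 1)) \<and>
    1 + TT m (min (aL m W) (m - 1) + min (bR m W) (m - 1))
      + \<bar>int (hd W) - loc m (min (aL m W) (m - 1) + min (bR m W) (m - 1))\<bar> \<le> int (length W)"
proof (induction W)
  case Nil then show ?case by simp
next
  case (Cons w ws)
  show ?case
  proof (cases "ws = []")
    case True
    then have "w = m" using Cons.prems by simp
    then show ?thesis using True by (simp add: valid_def loc_def)
  next
    case False
    let ?M = "m - 1"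
    define a where "a = aL m ws"
    define b where "b = bR m ws"
    define h where "h = hd ws"
    let ?ac = "min a ?M" and ?bc = "min b ?M"
    have wws: "wk (pathE m) ws" "{w, h} \<in> pathE m" using Cons.prems(1) False wk_Cons h_def by blast+
    have ows: "okf (gY m) (eY m) ws" using Cons.prems(4) by simp
    have IH: "valid ?ac ?bc \<and> 1 + TT m (?ac + ?bc) + \<bar>int h - loc m (?ac + ?bc)\<bar> \<le> int (length ws)"
      using Cons.IH[OF wws(1) False _ ows] Cons.prems(3) False a_def b_def h_def by simp
    have hb: "m - h \<le> a" "h - m \<le> b" using aL_mem[of h ws m] False h_def a_def b_def by auto
    have adj: "w = Suc h \<or> h = Suc w" using pe[OF wws(2)] by auto
    have d1: "\<bar>int w - int h\<bar> = 1" using adj by auto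
    have aW: "aL m (w # ws) = max (m - w) a" and bW: "bR m (w # ws) = max (w - m) b"
      by (simp_all add: a_def b_def)
    have hdW: "hd (w # ws) = w" by simp
    have lenW: "int (length (w # ws)) = int (length ws) + 1" by simp
    have gw: "\<And>u. u \<in> set ws \<Longrightarrow> m - u \<le> a \<and> u - m \<le> b" using aL_mem a_def b_def by blast
    have okw: "gY m w \<or> (\<exists>u\<in>set ws. eY m u = eY m w \<and> gY m u)" using Cons.prems(4) by simp
    show ?thesis
    proof (cases "m - w \<le> a \<and> w - m \<le> b")
      case True
      then have "aL m (w # ws) = a" "bR m (w # ws) = b" using aW bW by auto
      then show ?thesis using IH pot_same[OF d1] hdW lenW by simp
    next
      case nt: False
      show ?thesis
      proof (cases "m - w \<le> a")
        case False
        then have wl: "w < m" "m - w = Suc a" using hb adj by auto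
        then have aW': "aL m (w # ws) = Suc a" and bW': "bR m (w # ws) = b" using aW bW by auto
        show ?thesis
        proof (cases "?M \<le> a")
          case True
          then have "min (Suc a) ?M = ?ac" by simp
          then show ?thesis using IH pot_same[OF d1] aW' bW' hdW lenW by simp
        next
          case aM: False
          have con: "even (Suc a) \<Longrightarrow> Suc a \<le> ?bc"
          proof -
            assume ev: "even (Suc a)"
            have lw: "pathLab m w = (True, Suc a)" using wl by (simp add: lab_left)
            have "Suc a \<notin> pathY m" using ev by (simp add: pathY_eq)
            then have "\<not> gY m w" using lw by (simp add: gY_def)
            then obtain u where u: "u \<in> set ws" "eY m u = Suc a" "gY m u" using okw lw by (auto simp: eY_def)
            have "m < u"
            proof (rule ccontr)
              assume "\<not> m < u"
              then consider "u < m" | "u = m" by linarith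
              then show False
              proof cases
                case 1 then show False using u gw[OF u(1)] by (simp add: eY_def lab_left)
              next
                case 2 then show False using u aM by (simp add: eY_def lab_mid)
              qed
            qed
            then have "u - m = Suc a" using u by (simp add: eY_def lab_right)
            then show "Suc a \<le> ?bc" using gw[OF u(1)] aM by simp
          qed
          have ac: "?ac = a" and ac': "min (Suc a) ?M = Suc a" using aM by auto
          have tr: "valid (Suc a) ?bc \<and> loc m (Suc a + ?bc) = int m - int (Suc a)"
            using tranA[of a ?bc m] IH ac con by simp
          have "loc m (Suc (a + ?bc)) = int w" using tr wl by simp
          then have "1 + TT m (Suc (a + ?bc)) + \<bar>int w - loc m (Suc (a + ?bc))\<bar> \<le> int (length ws) + 1"
            using pot_step[OF d1, of m "a + ?bc"] IH ac by simp
          then have ineq: "1 + TT m (Suc a + ?bc) + \<bar>int w - loc m (Suc a + ?bc)\<bar> \<le> int (length ws) + 1" by simp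
          have ge: "min (aL m (w # ws)) ?M = Suc a" "min (bR m (w # ws)) ?M = ?bc" using aW' bW' ac' by simp_all
          show ?thesis unfolding ge hdW lenW using conjunct1[OF tr] ineq by blast
        qed
      next
        case True
        then have nb: "\<not> w - m \<le> b" using nt by simp
        then have wr: "m < w" "w - m = Suc b" using hb adj by auto
        then have aW': "aL m (w # ws) = a" and bW': "bR m (w # ws) = Suc b" using aW bW by auto
        show ?thesis
        proof (cases "?M \<le> b")
          case True
          then have "min (Suc b) ?M = ?bc" by simp
          then show ?thesis using IH pot_same[OF d1] aW' bW' hdW lenW by simp
        next
          case bM: False
          have con: "odd (Suc b) \<Longrightarrow> Suc b \<le> ?ac"
          proof -
            assume od: "odd (Suc b)"
            have lw: "pathLab m w = (False, Suc b)" using wr by (simp add: lab_right)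
            have "Suc b \<in> pathY m" using od bM by (simp add: pathY_eq)
            then have "\<not> gY m w" using lw by (simp add: gY_def)
            then obtain u where u: "u \<in> set ws" "eY m u = Suc b" "gY m u" using okw lw by (auto simp: eY_def)
            have "u < m"
            proof (rule ccontr)
              assume "\<not> u < m"
              then consider "m < u" | "u = m" by linarith
              then show False
              proof cases
                case 1 then show False using u gw[OF u(1)] by (simp add: eY_def lab_right)
              next
                case 2 then show False using u bM by (simp add: eY_def lab_mid)
              qed
            qed
            then have "m - u = Suc b" using u by (simp add: eY_def lab_left)
            then show "Suc b \<le> ?ac" using gw[OF u(1)] bM by simp
          qed
          have bc: "?bc = b" and bc': "min (Suc b) ?M = Suc b" using bM by auto
          have tr: "valid ?ac (Suc b) \<and> loc m (?ac + Suc b) = int m + int (Suc b)"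
            using tranB[of ?ac b m] IH bc con by simp
          have "loc m (Suc (?ac + b)) = int w" using tr wr by simp
          then have "1 + TT m (Suc (?ac + b)) + \<bar>int w - loc m (Suc (?ac + b))\<bar> \<le> int (length ws) + 1"
            using pot_step[OF d1, of m "?ac + b"] IH bc by simp
          then have ineq: "1 + TT m (?ac + Suc b) + \<bar>int w - loc m (?ac + Suc b)\<bar> \<le> int (length ws) + 1" by simp
          have ge: "min (aL m (w # ws)) ?M = ?ac" "min (bR m (w # ws)) ?M = Suc b" using aW' bW' bc' by simp_all
          show ?thesis unfolding ge hdW lenW using conjunct1[OF tr] ineq by blast
        qed
      qed
    qed
  qed
qed


lemma wk_tl: "wk E xs \<Longrightarrow> wk E (tl xs)"
  by (cases "(E, xs)" rule: wk.cases) auto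

lemma fold_cert:
  assumes c: "certifying_walk V E lab v X W" and X: "X \<subseteq> univ V lab" and t: "tl W \<noteq> []"
    and Z: "Z \<subseteq> univ V lab"
  shows "fold (step lab) (tl W) Z = X"
proof (rule set_eqI)
  fix x
  note cp = cert_props[OF c]
  obtain w0 ws where W: "W = w0 # ws" using cp(1) by (cases W) auto
  have ws: "ws \<noteq> []" "tl W = ws" using t W by auto
  have lws: "last ws = w0" using cp(4,5) W ws by simp
  show "x \<in> fold (step lab) (tl W) Z \<longleftrightarrow> x \<in> X"
  proof (cases "x \<in> univ V lab")
    case True
    have ne: "filter (\<lambda>w. snd (lab w) = x) W \<noteq> []" using cp(6)[OF True] .
    have ne2: "filter (\<lambda>w. snd (lab w) = x) ws \<noteq> []"
    proof (cases "snd (lab w0) = x")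
      case True
      have "w0 \<in> set ws" using lws ws(1) last_in_set by metis
      then show ?thesis using True by (auto simp: filter_empty_conv)
    next
      case False then show ?thesis using ne W by simp
    qed
    have leq: "last (filter (\<lambda>w. snd (lab w) = x) W) = last (filter (\<lambda>w. snd (lab w) = x) ws)"
      using ne2 W by simp
    have ex: "\<exists>w\<in>set ws. snd (lab w) = x" using ne2 by (auto simp: filter_empty_conv)
    have "x \<in> fold (step lab) ws Z \<longleftrightarrow> fst (lab (last (filter (\<lambda>w. snd (lab w) = x) ws)))"
      unfolding fold_step_mem using ex by (simp only: if_True)
    then show ?thesis using cp(7)[OF True] leq ws by simp
  next
    case False
    have "set ws \<subseteq> V" using cp(2) W by auto
    then have "\<not> (\<exists>w\<in>set ws. snd (lab w) = x)" using False univ_mem by blast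
    then show ?thesis using False X Z ws by (auto simp: fold_step_mem)
  qed
qed

lemma final_arith:
  fixes K m :: nat
  assumes "1 \<le> K" "m \<le> K + 2"
  shows "(2*m+1)^2 \<le> 100 * (2 + (K - 1) * K)"
proof -
  obtain j where j: "K = Suc j" using assms by (cases K) auto
  have "(2*m+1)^2 \<le> (2*K+5)^2" using assms by (intro power_mono) auto
  also have "\<dots> = 4*(j*j) + 28*j + 49" unfolding j by (simp add: power2_eq_square algebra_simps)
  also have "\<dots> \<le> 100 * (2 + j * Suc j)" by (simp add: algebra_simps)
  also have "\<dots> = 100 * (2 + (K - 1) * K)" unfolding j by simp
  finally show ?thesis .
qed

lemma dwalk_lb:
  assumes m: "2 \<le> m" and L: "is_dwalk (RR m) L" and hL: "hd L = (m, {})" and lL: "last L = (m, pathY m)"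
  shows "(2*m+1)^2 \<le> 100 * length L"
proof -
  have ne: "L \<noteq> []" and dL: "dwk (RR m) L" using L by (auto simp: is_dwalk_iff)
  let ?Q = "map fst L"
  have pj: "wk (pathE m) ?Q" "snd (last L) = fold (step (pathLab m)) (tl ?Q) (snd (hd L))"
    using dwk_proj[OF dL] ne by auto
  define W where "W = tl ?Q"
  have fY: "fold (step (pathLab m)) W {} = pathY m" using pj(2) hL lL W_def by simp
  have one: "1 \<in> pathY m" using m by (simp add: pathY_eq)
  have Wne: "W \<noteq> []"
  proof
    assume "W = []" then show False using fY one by simp
  qed
  have wkW: "wk (pathE m) W" using wk_tl[OF pj(1)] W_def by simp
  have lastW: "last W = m"
  proof -
    have "last ?Q = m" using lL ne by (simp add: last_map)
    then show ?thesis using Wne W_def ne by (metis last_tl)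
  qed
  have lenL: "length L = 1 + length W" using ne W_def by (cases L) auto
  have okW: "okf (gY m) (eY m) W"
  proof (rule last_okf, rule ballI)
    fix w assume w: "w \<in> set W"
    let ?x = "snd (pathLab m w)"
    let ?u = "last (filter (\<lambda>u. eY m u = eY m w) W)"
    have fe: "filter (\<lambda>u. eY m u = eY m w) W = filter (\<lambda>u. snd (pathLab m u) = ?x) W" by (simp add: eY_def)
    have ex: "\<exists>w'\<in>set W. snd (pathLab m w') = ?x" using w by blast
    have neF: "filter (\<lambda>u. snd (pathLab m u) = ?x) W \<noteq> []" using w by (auto simp: filter_empty_conv)
    have "?x \<in> fold (step (pathLab m)) W {} \<longleftrightarrow> fst (pathLab m (last (filter (\<lambda>u. snd (pathLab m u) = ?x) W)))"
      unfolding fold_step_mem using ex by (simp only: if_True)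
    then have "?x \<in> pathY m \<longleftrightarrow> fst (pathLab m (last (filter (\<lambda>u. snd (pathLab m u) = ?x) W)))"
      using fY by simp
    moreover have "last (filter (\<lambda>u. snd (pathLab m u) = ?x) W) \<in> set (filter (\<lambda>u. snd (pathLab m u) = ?x) W)"
      using neF last_in_set by blast
    then have "snd (pathLab m (last (filter (\<lambda>u. snd (pathLab m u) = ?x) W))) = ?x"
      by (metis (mono_tags, lifting) mem_Collect_eq set_filter)
    ultimately show "gY m ?u" unfolding fe by (simp add: gY_def)
  qed
  have P: "valid (min (aL m W) (m - 1)) (min (bR m W) (m - 1)) \<and>
    1 + TT m (min (aL m W) (m - 1) + min (bR m W) (m - 1))
      + \<bar>int (hd W) - loc m (min (aL m W) (m - 1) + min (bR m W) (m - 1))\<bar> \<le> int (length W)"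
    using pot[OF m wkW Wne lastW okW] .
  obtain K where K: "odd K" "1 \<le> K" "K < m" "m \<le> K + 2"
  proof (cases "odd (m - 1)")
    case True
    then show ?thesis using that[of "m - 1"] m by (auto elim: oddE)
  next
    case False
    then have "odd (m - 2)" using m by presburger
    then show ?thesis using that[of "m - 2"] m by (auto elim: oddE)
  qed
  have "K \<in> pathY m" using K by (simp add: pathY_eq)
  then have KY: "K \<in> fold (step (pathLab m)) W {}" using fY by simp
  have exK: "\<exists>w\<in>set W. snd (pathLab m w) = K"
  proof (rule ccontr)
    assume "\<not> ?thesis" then show False using KY by (simp add: fold_step_mem)
  qed
  let ?u = "last (filter (\<lambda>w. snd (pathLab m w) = K) W)"
  have fu: "fst (pathLab m ?u)" using KY exK by (simp add: fold_step_mem)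
  have neK: "filter (\<lambda>w. snd (pathLab m w) = K) W \<noteq> []" using exK by (auto simp: filter_empty_conv)
  then have "?u \<in> set (filter (\<lambda>w. snd (pathLab m w) = K) W)" using last_in_set by blast
  then have uW: "?u \<in> set W" and su: "snd (pathLab m ?u) = K" by auto
  have gen: "\<And>p. fst (pathLab m p) \<Longrightarrow> p < m" by (simp add: pathLab_def split: if_splits)
  have "?u < m" using gen fu by blast
  then have "m - ?u = K" using su by (simp add: lab_left)
  then have "K \<le> aL m W" using aL_mem[OF uW, of m] by simp
  then have acK: "K \<le> min (aL m W) (m - 1)" using K by simp
  let ?s = "min (aL m W) (m - 1) + min (bR m W) (m - 1)"
  obtain ac bc where ab: "ac = min (aL m W) (m - 1)" "bc = min (bR m W) (m - 1)" by blast
  have "valid ac bc" using conjunct1[OF P] ab by simp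
  then have "ac \<le> Suc bc" unfolding valid_def by auto
  moreover have "K \<le> ac" using acK ab by simp
  ultimately have "2 * (K - 1) \<le> ac + bc" by linarith
  then have "2 * (K - 1) \<le> ?s" using ab by simp
  then have t1: "TT m (2 * (K - 1)) \<le> TT m ?s" using TT_mono by blast
  have t2: "int ((K - 1) * (K - 1 + 1)) \<le> TT m (2 * (K - 1))" using TT_even by blast
  have kk: "(K - 1) * (K - 1 + 1) = (K - 1) * K" using K by simp
  have t3: "int ((K - 1) * K) \<le> TT m ?s" using t1 t2 unfolding kk by linarith
  define A where "A = \<bar>int (hd W) - loc m ?s\<bar>"
  have P2: "1 + TT m ?s + A \<le> int (length W)" using conjunct2[OF P] unfolding A_def .
  have "0 \<le> A" unfolding A_def by simp
  then have "int ((K - 1) * K) + 1 \<le> int (length W)" using P2 t3 by linarith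
  then have LL: "2 + (K - 1) * K \<le> length L" using lenL by linarith
  show ?thesis using final_arith[OF K(2,4)] mult_le_mono2[OF LL, of 100] by (rule le_trans)
qed

lemma cert_lb:
  assumes m: "2 \<le> m" and c: "certifying_walk (pathV m) (pathE m) (pathLab m) m (pathY m) W"
  shows "(2*m+1)^2 \<le> 100 * length W"
proof -
  note cp = cert_props[OF c]
  have univ: "univ (pathV m) (pathLab m) = {1..m}" using univ_path m by simp
  have "tl W \<noteq> []"
  proof
    assume t: "tl W = []"
    have "W = [hd W]" using cp(1) t by (cases W) auto
    then have Wm: "W = [m]" using cp(4) by simp
    have "1 \<in> univ (pathV m) (pathLab m)" using univ m by simp
    then have "\<exists>w\<in>set W. snd (pathLab m w) = 1" by (rule cert_cov[OF c])
    then show False using m Wm by (simp add: lab_mid)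
  qed
  have Y: "pathY m \<subseteq> univ (pathV m) (pathLab m)"
  proof
    fix y assume "y \<in> pathY m"
    then have "odd y" "y < m" by (auto simp: pathY_eq)
    then have "1 \<le> y" "y \<le> m" using odd_pos by fastforce+
    then show "y \<in> univ (pathV m) (pathLab m)" unfolding univ by simp
  qed
  have e: "{} \<subseteq> univ (pathV m) (pathLab m)" by simp
  have f: "fold (step (pathLab m)) (tl W) {} = pathY m" using fold_cert[OF c Y \<open>tl W \<noteq> []\<close> e] .
  let ?L = "trace (pathLab m) {} W"
  have d: "dwk (RR m) ?L" using trace_dwk[OF cp(3) cp(2) e] .
  have ne: "?L \<noteq> []" using trace_ne[OF cp(1)] .
  have dw: "is_dwalk (RR m) ?L" using d ne by (simp add: is_dwalk_iff)
  have h: "hd ?L = (m, {})" using trace_hd[OF cp(1)] cp(4) by simp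
  have l: "last ?L = (m, pathY m)" using trace_last[OF cp(1)] cp(5) f by simp
  have "(2*m+1)^2 \<le> 100 * length ?L" using dwalk_lb[OF m dw h l] .
  then show ?thesis by (simp add: trace_length)
qed


theorem mainTheorem5:
  shows
  "(\<exists>c::real. c > 0 \<and>
      (\<forall>V E lab C v X. event_graph V E lab \<and> is_sink_component V E lab C \<and> (v, X) \<in> C \<longrightarrow>
         (\<exists>W. certifying_walk V E lab v X W \<and> real (length W) \<le> c * real (card V) ^ 2)))
   \<and> (\<exists>c'::real. c' > 0 \<and>
      (\<forall>V E lab C a b. event_graph V E lab \<and> is_sink_component V E lab C \<and> a \<in> C \<and> b \<in> C \<longrightarrow>
         (\<exists>W. is_dwalk (dec_edges V E lab) W \<and> set W \<subseteq> C \<and> hd W = a \<and> last W = b \<and>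
              real (length W) \<le> c' * real (card V) ^ 2)))
   \<and> (\<exists>c::real. c > 0 \<and>
      (\<forall>m::nat. m \<ge> 2 \<longrightarrow>
         event_graph (pathV m) (pathE m) (pathLab m) \<and>
         (\<exists>C. is_sink_component (pathV m) (pathE m) (pathLab m) C \<and>
              (m, {}) \<in> C \<and> (m, pathY m) \<in> C) \<and>
         (\<forall>W. certifying_walk (pathV m) (pathE m) (pathLab m) m (pathY m) W \<longrightarrow>
              real (length W) \<ge> c * real (2*m+1) ^ 2) \<and>
         (\<forall>W. is_dwalk (dec_edges (pathV m) (pathE m) (pathLab m)) W \<and>
              hd W = (m, {}) \<and> last W = (m, pathY m) \<longrightarrow>
              real (length W) \<ge> c * real (2*m+1) ^ 2)))"
proof (intro conjI)
  show "\<exists>c::real. c > 0 \<and>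
      (\<forall>V E lab C v X. event_graph V E lab \<and> is_sink_component V E lab C \<and> (v, X) \<in> C \<longrightarrow>
         (\<exists>W. certifying_walk V E lab v X W \<and> real (length W) \<le> c * real (card V) ^ 2))"
  proof (intro exI[of _ 2] conjI allI impI)
    fix V E lab C v X
    assume h: "event_graph V E lab \<and> is_sink_component V E lab C \<and> (v, X) \<in> C"
    then obtain W where W: "certifying_walk V E lab v X W" "length W \<le> 2 * card V ^ 2"
      using partA by blast
    have "real (length W) \<le> real (2 * card V ^ 2)" using W(2) of_nat_mono by blast
    then show "\<exists>W. certifying_walk V E lab v X W \<and> real (length W) \<le> 2 * real (card V) ^ 2"
      using W(1) by auto
  qed simp
next
  show "\<exists>c'::real. c' > 0 \<and>
      (\<forall>V E lab C a b. event_graph V E lab \<and> is_sink_component V E lab C \<and> a \<in> C \<and> b \<in> C \<longrightarrow>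
         (\<exists>W. is_dwalk (dec_edges V E lab) W \<and> set W \<subseteq> C \<and> hd W = a \<and> last W = b \<and>
              real (length W) \<le> c' * real (card V) ^ 2))"
  proof (intro exI[of _ 3] conjI allI impI)
    fix V E lab C a b
    assume h: "event_graph V E lab \<and> is_sink_component V E lab C \<and> a \<in> C \<and> b \<in> C"
    then obtain L where L: "is_dwalk (dec_edges V E lab) L" "set L \<subseteq> C" "hd L = a" "last L = b"
      "length L \<le> 3 * card V ^ 2"
      using partA2 by blast
    have "real (length L) \<le> real (3 * card V ^ 2)" using L(5) of_nat_mono by blast
    then show "\<exists>W. is_dwalk (dec_edges V E lab) W \<and> set W \<subseteq> C \<and> hd W = a \<and> last W = b \<and>
              real (length W) \<le> 3 * real (card V) ^ 2"
      using L by auto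
  qed simp
next
  show "\<exists>c::real. c > 0 \<and>
      (\<forall>m::nat. m \<ge> 2 \<longrightarrow>
         event_graph (pathV m) (pathE m) (pathLab m) \<and>
         (\<exists>C. is_sink_component (pathV m) (pathE m) (pathLab m) C \<and>
              (m, {}) \<in> C \<and> (m, pathY m) \<in> C) \<and>
         (\<forall>W. certifying_walk (pathV m) (pathE m) (pathLab m) m (pathY m) W \<longrightarrow>
              real (length W) \<ge> c * real (2*m+1) ^ 2) \<and>
         (\<forall>W. is_dwalk (dec_edges (pathV m) (pathE m) (pathLab m)) W \<and>
              hd W = (m, {}) \<and> last W = (m, pathY m) \<longrightarrow>
              real (length W) \<ge> c * real (2*m+1) ^ 2))"
  proof (intro exI[of _ "1/100"] conjI allI impI)
    fix m :: nat assume m: "2 \<le> m"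
    have conv: "\<And>n::nat. (2*m+1)^2 \<le> 100 * n \<Longrightarrow> 1/100 * real (2*m+1) ^ 2 \<le> real n"
    proof -
      fix n :: nat assume "(2*m+1)^2 \<le> 100 * n"
      then have "real ((2*m+1)^2) \<le> real (100 * n)" using of_nat_mono by blast
      then show "1/100 * real (2*m+1) ^ 2 \<le> real n" by simp
    qed
    show "event_graph (pathV m) (pathE m) (pathLab m)" using eg_path m by simp
    show "\<exists>C. is_sink_component (pathV m) (pathE m) (pathLab m) C \<and> (m, {}) \<in> C \<and> (m, pathY m) \<in> C"
      using path_sink[OF m] .
    show "real (length W) \<ge> 1/100 * real (2*m+1) ^ 2"
      if "certifying_walk (pathV m) (pathE m) (pathLab m) m (pathY m) W" for W
      using cert_lb[OF m that] conv by blast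
    show "real (length W) \<ge> 1/100 * real (2*m+1) ^ 2"
      if "is_dwalk (dec_edges (pathV m) (pathE m) (pathLab m)) W \<and>
              hd W = (m, {}) \<and> last W = (m, pathY m)" for W
      using dwalk_lb[OF m] that conv by blast
  qed simp
qed


end
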